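(* Let $m\ge1$, $k\ge1$, and let $d_0,\dots,d_{k-1}\in S$ be the coefficients of $t^0,\dots,t^{k-1}$ of $\det X(t)$ for the generic $m\times m$ matrix $X(t)$. With respect to the graded reverse lexicographic order described below, $\{d_0,\dots,d_{k-1}\}$ is a Gröbner basis of $\mathcal I^{m,m}_{m,k}$. Moreover, writing an index $0\le q\le k-1$ as $q=\lambda m+\mu$ with $0\le\mu\le m-1$, the leading monomial of $d_q$ is $$\prod_{i=1}^{m-\mu}x^{(\lambda)}_{i,\,m-\mu+1-i}\ \cdot\prod_{i=m-\mu+1}^{m}x^{(\lambda+1)}_{i,\,2m-\mu+1-i},$$ and the leading monomials of distinct $d_q$ involve disjoint sets of variables.
   Context: Let $F$ be an algebraically closed field, $S=F[x^{(l)}_{i,j}:1\le i,j\le m,\ 0\le l\le k-1]$, and $X(t)$ the $m\times m$ matrix over $S[t]/(t^k)$ with entries $x_{i,j}(t)=\sum_{l=0}^{k-1}x^{(l)}_{i,j}t^l$; every element of $S[t]/(t^k)$ is uniquely $\sum_{l=0}^{k-1}c_lt^l$, $c_l\in S$. $\mathcal I^{m,m}_{m,k}$ is the ideal of $S$ generated by the coefficients of all powers of $t$ of $\det X(t)$. The variables are totally ordered by: $x^{(l)}_{i,j}>x^{(l')}_{i',j'}$ iff $l>l'$, or $l=l'$ and $(i,j)$ precedes $(i',j')$ lexicographically (i.e. $x^{(k-1)}_{1,1}>x^{(k-1)}_{1,2}>\dots>x^{(k-1)}_{m,m}>x^{(k-2)}_{1,1}>\dots>x^{(0)}_{m,m}$).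 The graded reverse lexicographic (grevlex) order on monomials with respect to this variable order is: monomials are first compared by total degree; for equal total degree, $\alpha>\beta$ iff, listing variables from largest to smallest and viewing exponent vectors in $\mathbb Z^{km^2}$, the rightmost (i.e. smallest-variable) nonzero entry of $\alpha-\beta$ is negative. *)

theory Defs
  imports "HOL-Library.Poly_Mapping" "HOL-Computational_Algebra.Polynomial"
          "HOL-Combinatorics.Permutations"
begin

text \<open>Variables x^(l)_(i,j) are encoded as triples (l, i, j).
  Monomials are finitely supported exponent vectors; polynomials in S = F[x]
  are finitely supported coefficient functions on monomials.\<close>

type_synonym var = "nat \<times> nat \<times> nat"
type_synonym monom = "var \<Rightarrow>\<^sub>0 nat"
type_synonym 'a mpoly = "monom \<Rightarrow>\<^sub>0 'a"

definition alg_closed_field :: "'a::field itself \<Rightarrow> bool" where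
  "alg_closed_field _ \<longleftrightarrow> (\<forall>p :: 'a poly. degree p > 0 \<longrightarrow> (\<exists>x. poly p x = 0))"

definition Xvar :: "nat \<Rightarrow> nat \<Rightarrow> nat \<Rightarrow> 'a::comm_ring_1 mpoly" where
  "Xvar l i j = Poly_Mapping.single (Poly_Mapping.single (l, i, j) 1) 1"

definition xt :: "nat \<Rightarrow> nat \<Rightarrow> nat \<Rightarrow> ('a::comm_ring_1 mpoly) poly" where
  "xt k i j = (\<Sum>l<k. monom (Xvar l i j) l)"

text \<open>det X(t) (Leibniz formula), computed in S[t]; reducing modulo t^k does not
  change the coefficients of t^0, ..., t^(k-1).\<close>
definition detX :: "nat \<Rightarrow> nat \<Rightarrow> ('a::comm_ring_1 mpoly) poly" where
  "detX m k = (\<Sum>p\<in>{p. p permutes {1..m}}. of_int (sign p) * (\<Prod>i\<in>{1..m}. xt k i (p i)))"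

definition dcoef :: "nat \<Rightarrow> nat \<Rightarrow> nat \<Rightarrow> 'a::comm_ring_1 mpoly" where
  "dcoef m k q = coeff (detX m k) q"

definition ideal_gen :: "'a::comm_ring_1 set \<Rightarrow> 'a set" where
  "ideal_gen G = {\<Sum>g\<in>F. c g * g | F c. finite F \<and> F \<subseteq> G}"

definition Ideal_mk :: "nat \<Rightarrow> nat \<Rightarrow> 'a::comm_ring_1 mpoly set" where
  "Ideal_mk m k = ideal_gen {dcoef m k q | q. q < k}"

definition var_gt :: "var \<Rightarrow> var \<Rightarrow> bool" where
  "var_gt v w = (case v of (l, i, j) \<Rightarrow> case w of (l', i', j') \<Rightarrow>
      l > l' \<or> (l = l' \<and> (i < i' \<or> (i = i' \<and> j < j'))))"

definition mdeg :: "monom \<Rightarrow> nat" where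
  "mdeg a = (\<Sum>v\<in>Poly_Mapping.keys a. Poly_Mapping.lookup a v)"

definition grevlex_gt :: "monom \<Rightarrow> monom \<Rightarrow> bool" where
  "grevlex_gt a b \<longleftrightarrow> mdeg a > mdeg b \<or>
     (mdeg a = mdeg b \<and> (\<exists>v. Poly_Mapping.lookup a v < Poly_Mapping.lookup b v \<and>
        (\<forall>w. var_gt v w \<longrightarrow> Poly_Mapping.lookup a w = Poly_Mapping.lookup b w)))"

definition lead_mon :: "'a::zero mpoly \<Rightarrow> monom" where
  "lead_mon f = (THE a. a \<in> Poly_Mapping.keys f \<and> (\<forall>b\<in>Poly_Mapping.keys f. b \<noteq> a \<longrightarrow> grevlex_gt a b))"

definition mon_dvd :: "monom \<Rightarrow> monom \<Rightarrow> bool" where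
  "mon_dvd a b \<longleftrightarrow> (\<forall>v. Poly_Mapping.lookup a v \<le> Poly_Mapping.lookup b v)"

definition is_groebner_basis :: "'a::comm_ring_1 mpoly set \<Rightarrow> 'a mpoly set \<Rightarrow> bool" where
  "is_groebner_basis G I \<longleftrightarrow> G \<subseteq> I \<and> 0 \<notin> G \<and>
     (\<forall>f\<in>I. f \<noteq> 0 \<longrightarrow> (\<exists>g\<in>G. mon_dvd (lead_mon g) (lead_mon f)))"

definition lm_formula :: "nat \<Rightarrow> nat \<Rightarrow> monom" where
  "lm_formula m q = (let lam = q div m; mu = q mod m in
     (\<Sum>i\<in>{1..m-mu}. Poly_Mapping.single (lam, i, m - mu + 1 - i) 1) +
     (\<Sum>i\<in>{m-mu+1..m}. Poly_Mapping.single (lam + 1, i, 2*m - mu + 1 - i) 1))"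

end

theory Submission
  imports Defs
begin


section \<open>Variable order\<close>

lemma var_gt_irrefl: "\<not> var_gt v v"
  by (cases v) (auto simp: var_gt_def)

lemma var_gt_trans: "var_gt u v \<Longrightarrow> var_gt v w \<Longrightarrow> var_gt u w"
  by (cases u; cases v; cases w) (auto simp: var_gt_def)

lemma var_gt_linear: "v \<noteq> w \<Longrightarrow> var_gt v w \<or> var_gt w v"
  by (cases v; cases w) (auto simp: var_gt_def)

lemma var_gt_asym: "var_gt v w \<Longrightarrow> \<not> var_gt w v"
  using var_gt_trans var_gt_irrefl by blast

lemma var_min:
  assumes "finite S" "S \<noteq> {}"
  shows "\<exists>u\<in>S. \<forall>w\<in>S. w \<noteq> u \<longrightarrow> var_gt w u"
  using assms
proof (induction S rule: finite_ne_induct)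
  case (singleton x) then show ?case by auto
next
  case (insert x F)
  then obtain u where u: "u \<in> F" "\<forall>w\<in>F. w \<noteq> u \<longrightarrow> var_gt w u" by blast
  show ?case
  proof (cases "var_gt x u")
    case True then show ?thesis using u by auto
  next
    case False
    then have "x = u \<or> var_gt u x" using var_gt_linear by blast
    then have ux: "var_gt u x" using u insert.hyps by blast
    have "\<forall>w\<in>insert x F. w \<noteq> x \<longrightarrow> var_gt w x"
    proof (intro ballI impI)
      fix w assume "w \<in> insert x F" "w \<noteq> x"
      then have "w \<in> F" by simp
      then show "var_gt w x"
        using u(2) ux var_gt_trans by (cases "w = u") blast+
    qed
    then show ?thesis by blast
  qed
qed

section \<open>Degree\<close>

lemma mdeg_superset:
  assumes "finite S" "Poly_Mapping.keys a \<subseteq> S"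
  shows "mdeg a = (\<Sum>v\<in>S. Poly_Mapping.lookup a v)"
  unfolding mdeg_def using assms
  by (intro sum.mono_neutral_left) (auto simp: in_keys_iff)

lemma mdeg_add: "mdeg (a + b) = mdeg a + mdeg b"
proof -
  let ?S = "Poly_Mapping.keys a \<union> Poly_Mapping.keys b"
  have "mdeg (a + b) = (\<Sum>v\<in>?S. Poly_Mapping.lookup (a+b) v)"
    using keys_add[of a b] by (intro mdeg_superset) auto
  also have "\<dots> = (\<Sum>v\<in>?S. Poly_Mapping.lookup a v) + (\<Sum>v\<in>?S. Poly_Mapping.lookup b v)"
    by (simp add: lookup_add sum.distrib)
  also have "\<dots> = mdeg a + mdeg b"
    by (subst (1 2) mdeg_superset[of ?S]) auto
  finally show ?thesis .
qed

lemma mdeg_zero [simp]: "mdeg 0 = 0"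
  by (simp add: mdeg_def)

lemma mdeg_single [simp]: "mdeg (Poly_Mapping.single v n) = n"
  by (simp add: mdeg_def)

lemma mdeg_sum: "mdeg (sum f A) = (\<Sum>i\<in>A. mdeg (f i))"
  by (induction A rule: infinite_finite_induct) (auto simp: mdeg_add)

section \<open>Grevlex\<close>

definition dset :: "monom \<Rightarrow> monom \<Rightarrow> var set" where
  "dset a b = {v. Poly_Mapping.lookup a v \<noteq> Poly_Mapping.lookup b v}"

lemma finite_dset: "finite (dset a b)"
proof -
  have "dset a b \<subseteq> Poly_Mapping.keys a \<union> Poly_Mapping.keys b"
    by (auto simp: dset_def in_keys_iff)
  then show ?thesis by (rule finite_subset) simp
qed

lemma dset_empty: "dset a b = {} \<longleftrightarrow> a = b"
proof
  assume "dset a b = {}"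
  then have "\<And>v. Poly_Mapping.lookup a v = Poly_Mapping.lookup b v" by (auto simp: dset_def)
  then show "a = b" by (rule poly_mapping_eqI)
qed (simp add: dset_def)

lemma grevlex_gtI:
  assumes "mdeg a = mdeg b" "Poly_Mapping.lookup a v < Poly_Mapping.lookup b v"
    "\<And>w. var_gt v w \<Longrightarrow> Poly_Mapping.lookup a w = Poly_Mapping.lookup b w"
  shows "grevlex_gt a b"
  unfolding grevlex_gt_def using assms by blast

lemma grevlex_irrefl: "\<not> grevlex_gt a a"
  by (auto simp: grevlex_gt_def)

lemma grevlex_gtE:
  assumes "grevlex_gt a b" "mdeg a = mdeg b"
  obtains v where "Poly_Mapping.lookup a v < Poly_Mapping.lookup b v"
    "\<And>w. var_gt v w \<Longrightarrow> Poly_Mapping.lookup a w = Poly_Mapping.lookup b w"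
  using assms unfolding grevlex_gt_def by auto

lemma grevlex_trans:
  assumes "grevlex_gt a b" "grevlex_gt b c"
  shows "grevlex_gt a c"
proof (cases "mdeg a > mdeg b \<or> mdeg b > mdeg c")
  case True
  have "mdeg a \<ge> mdeg b" "mdeg b \<ge> mdeg c" using assms by (auto simp: grevlex_gt_def)
  then show ?thesis using True by (auto simp: grevlex_gt_def)
next
  case False
  then have d: "mdeg a = mdeg b" "mdeg b = mdeg c" using assms by (auto simp: grevlex_gt_def)
  obtain v1 where v1: "Poly_Mapping.lookup a v1 < Poly_Mapping.lookup b v1"
    "\<And>w. var_gt v1 w \<Longrightarrow> Poly_Mapping.lookup a w = Poly_Mapping.lookup b w"
    using grevlex_gtE[OF assms(1) d(1)] by blast
  obtain v2 where v2: "Poly_Mapping.lookup b v2 < Poly_Mapping.lookup c v2"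
    "\<And>w. var_gt v2 w \<Longrightarrow> Poly_Mapping.lookup b w = Poly_Mapping.lookup c w"
    using grevlex_gtE[OF assms(2) d(2)] by blast
  have dd: "mdeg a = mdeg c" using d by simp
  consider "v1 = v2" | "var_gt v2 v1" | "var_gt v1 v2" using var_gt_linear by blast
  then show ?thesis
  proof cases
    case 1
    show ?thesis
    proof (rule grevlex_gtI[OF dd, of v1])
      show "Poly_Mapping.lookup a v1 < Poly_Mapping.lookup c v1" using v1 v2 1 by simp
      fix w assume "var_gt v1 w" then show "Poly_Mapping.lookup a w = Poly_Mapping.lookup c w"
        using v1(2) v2(2) 1 by simp
    qed
  next
    case 2
    show ?thesis
    proof (rule grevlex_gtI[OF dd, of v1])
      show "Poly_Mapping.lookup a v1 < Poly_Mapping.lookup c v1" using v1 v2(2)[OF 2] by simp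
      fix w assume w: "var_gt v1 w"
      then have "var_gt v2 w" using 2 var_gt_trans by blast
      then show "Poly_Mapping.lookup a w = Poly_Mapping.lookup c w"
        using v1(2)[OF w] v2(2) by simp
    qed
  next
    case 3
    show ?thesis
    proof (rule grevlex_gtI[OF dd, of v2])
      show "Poly_Mapping.lookup a v2 < Poly_Mapping.lookup c v2" using v2 v1(2)[OF 3] by simp
      fix w assume w: "var_gt v2 w"
      then have "var_gt v1 w" using 3 var_gt_trans by blast
      then show "Poly_Mapping.lookup a w = Poly_Mapping.lookup c w"
        using v2(2)[OF w] v1(2) by simp
    qed
  qed
qed

lemma grevlex_asym: "grevlex_gt a b \<Longrightarrow> \<not> grevlex_gt b a"
  using grevlex_trans grevlex_irrefl by blast

lemma grevlex_total:
  assumes "a \<noteq> b"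
  shows "grevlex_gt a b \<or> grevlex_gt b a"
proof (cases "mdeg a = mdeg b")
  case False then show ?thesis by (auto simp: grevlex_gt_def)
next
  case True
  have "dset a b \<noteq> {}" using assms dset_empty by blast
  then obtain u where u: "u \<in> dset a b" "\<forall>w\<in>dset a b. w \<noteq> u \<longrightarrow> var_gt w u"
    using var_min[OF finite_dset] by blast
  have below: "\<And>w. var_gt u w \<Longrightarrow> Poly_Mapping.lookup a w = Poly_Mapping.lookup b w"
  proof (rule ccontr)
    fix w assume w: "var_gt u w" "Poly_Mapping.lookup a w \<noteq> Poly_Mapping.lookup b w"
    then have "w \<in> dset a b" by (simp add: dset_def)
    moreover have "w \<noteq> u" using w var_gt_irrefl by blast
    ultimately have "var_gt w u" using u by blast
    then show False using w var_gt_asym by blast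
  qed
  have "Poly_Mapping.lookup a u \<noteq> Poly_Mapping.lookup b u" using u by (auto simp: dset_def)
  then consider "Poly_Mapping.lookup a u < Poly_Mapping.lookup b u" | "Poly_Mapping.lookup b u < Poly_Mapping.lookup a u"
    by linarith
  then show ?thesis
  proof cases
    case 1 then show ?thesis using below True by (intro disjI1 grevlex_gtI) auto
  next
    case 2 then show ?thesis using below True by (intro disjI2 grevlex_gtI) auto
  qed
qed

lemma grevlex_add:
  assumes "grevlex_gt a b"
  shows "grevlex_gt (a + c) (b + c)"
proof (cases "mdeg a > mdeg b")
  case True then show ?thesis by (simp add: grevlex_gt_def mdeg_add)
next
  case False
  then obtain v where v: "mdeg a = mdeg b" "Poly_Mapping.lookup a v < Poly_Mapping.lookup b v"
    "\<forall>w. var_gt v w \<longrightarrow> Poly_Mapping.lookup a w = Poly_Mapping.lookup b w"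
    using assms unfolding grevlex_gt_def by blast
  show ?thesis using v by (intro grevlex_gtI[of _ _ v]) (auto simp: mdeg_add lookup_add)
qed

lemma grevlex_add_left:
  assumes "grevlex_gt a b"
  shows "grevlex_gt (c + a) (c + b)"
  using grevlex_add[OF assms, of c] by (simp add: add.commute)

definition mge :: "monom \<Rightarrow> monom \<Rightarrow> bool" where
  "mge a b \<longleftrightarrow> a = b \<or> grevlex_gt a b"

lemma mge_refl [simp]: "mge a a" by (simp add: mge_def)

lemma mge_trans: "mge a b \<Longrightarrow> mge b c \<Longrightarrow> mge a c"
  unfolding mge_def using grevlex_trans by blast

lemma mge_gt_trans: "mge a b \<Longrightarrow> grevlex_gt b c \<Longrightarrow> grevlex_gt a c"
  unfolding mge_def using grevlex_trans by blast

lemma gt_mge_trans: "grevlex_gt a b \<Longrightarrow> mge b c \<Longrightarrow> grevlex_gt a c"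
  unfolding mge_def using grevlex_trans by blast

lemma mge_antisym: "mge a b \<Longrightarrow> mge b a \<Longrightarrow> a = b"
  unfolding mge_def using grevlex_asym by blast

lemma mge_total: "mge a b \<or> mge b a"
  unfolding mge_def using grevlex_total by blast

lemma not_mge: "\<not> mge a b \<longleftrightarrow> grevlex_gt b a"
  unfolding mge_def using grevlex_total grevlex_asym grevlex_irrefl by blast

lemma mge_add: "mge a b \<Longrightarrow> mge c d \<Longrightarrow> mge (a + c) (b + d)"
proof -
  assume ab: "mge a b" and cd: "mge c d"
  have 1: "mge (a + c) (b + c)" using ab grevlex_add unfolding mge_def by blast
  have 2: "mge (b + c) (b + d)" using cd grevlex_add_left unfolding mge_def by blast
  show ?thesis using mge_trans[OF 1 2] .
qed

lemma mge_mdeg: "mge a b \<Longrightarrow> mdeg b \<le> mdeg a"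
  unfolding mge_def grevlex_gt_def by auto

lemma mon_max:
  assumes "finite S" "S \<noteq> {}"
  shows "\<exists>a\<in>S. \<forall>b\<in>S. mge a b"
  using assms
proof (induction S rule: finite_ne_induct)
  case (singleton x) then show ?case by auto
next
  case (insert x F)
  then obtain u where u: "u \<in> F" "\<forall>w\<in>F. mge u w" by blast
  show ?case
  proof (cases "mge x u")
    case True
    have "\<forall>b\<in>insert x F. mge x b"
    proof
      fix b assume "b \<in> insert x F"
      show "mge x b"
      proof (cases "b = x")
        case False
        then have "b \<in> F" using \<open>b \<in> insert x F\<close> by simp
        then show ?thesis using u(2) mge_trans[OF True] by blast
      qed simp
    qed
    then show ?thesis by blast
  next
    case False
    then have "mge u x" using mge_total by blast
    then have "\<forall>b\<in>insert x F. mge u b" using u by blast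
    then show ?thesis using u(1) by blast
  qed
qed

section \<open>Leading monomial\<close>

lemma lead_mon_eqI:
  assumes "a \<in> Poly_Mapping.keys f" "\<forall>b\<in>Poly_Mapping.keys f. b \<noteq> a \<longrightarrow> grevlex_gt a b"
  shows "lead_mon f = a"
  unfolding lead_mon_def
proof (rule the_equality)
  show "a \<in> Poly_Mapping.keys f \<and> (\<forall>b\<in>Poly_Mapping.keys f. b \<noteq> a \<longrightarrow> grevlex_gt a b)"
    using assms by blast
  fix x assume "x \<in> Poly_Mapping.keys f \<and> (\<forall>b\<in>Poly_Mapping.keys f. b \<noteq> x \<longrightarrow> grevlex_gt x b)"
  then have x: "x \<in> Poly_Mapping.keys f" "\<forall>b\<in>Poly_Mapping.keys f. b \<noteq> x \<longrightarrow> grevlex_gt x b"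
    by auto
  show "x = a"
  proof (rule ccontr)
    assume "x \<noteq> a"
    then have "grevlex_gt a x" "grevlex_gt x a" using x assms by auto
    then show False using grevlex_asym by blast
  qed
qed

lemma lead_mon_props:
  assumes "f \<noteq> 0"
  shows "lead_mon f \<in> Poly_Mapping.keys f" "\<And>b. b \<in> Poly_Mapping.keys f \<Longrightarrow> mge (lead_mon f) b"
proof -
  obtain a where a: "a \<in> Poly_Mapping.keys f" "\<forall>b\<in>Poly_Mapping.keys f. mge a b"
    using mon_max[of "Poly_Mapping.keys f"] assms by auto
  have "\<forall>b\<in>Poly_Mapping.keys f. b \<noteq> a \<longrightarrow> grevlex_gt a b"
  proof (intro ballI impI)
    fix b assume "b \<in> Poly_Mapping.keys f" "b \<noteq> a"
    then have "mge a b" using a(2) by blast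
    then have "a = b \<or> grevlex_gt a b" unfolding mge_def by simp
    then show "grevlex_gt a b" using \<open>b \<noteq> a\<close> by simp
  qed
  then have la: "lead_mon f = a" using a(1) by (intro lead_mon_eqI)
  show "lead_mon f \<in> Poly_Mapping.keys f" unfolding la by (rule a(1))
  fix b assume "b \<in> Poly_Mapping.keys f"
  then show "mge (lead_mon f) b" unfolding la using a(2) by blast
qed



section \<open>Products\<close>

lemma poly_as_sum:
  fixes f :: "'a::comm_monoid_add mpoly"
  shows "f = (\<Sum>a\<in>Poly_Mapping.keys f. Poly_Mapping.single a (Poly_Mapping.lookup f a))"
proof (rule poly_mapping_eqI)
  fix x
  have "Poly_Mapping.lookup (\<Sum>a\<in>Poly_Mapping.keys f. Poly_Mapping.single a (Poly_Mapping.lookup f a)) x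
      = (\<Sum>a\<in>Poly_Mapping.keys f. if a = x then Poly_Mapping.lookup f a else 0)"
    by (simp add: lookup_sum lookup_single when_def)
  also have "\<dots> = Poly_Mapping.lookup f x"
    by (simp add: sum.delta' in_keys_iff)
  finally show "Poly_Mapping.lookup f x = Poly_Mapping.lookup (\<Sum>a\<in>Poly_Mapping.keys f. Poly_Mapping.single a (Poly_Mapping.lookup f a)) x"
    by simp
qed

lemma lookup_mult_eq:
  fixes p q :: "'a::comm_ring_1 mpoly"
  shows "Poly_Mapping.lookup (p * q) x =
    (\<Sum>a\<in>Poly_Mapping.keys p. \<Sum>b\<in>Poly_Mapping.keys q.
        if a + b = x then Poly_Mapping.lookup p a * Poly_Mapping.lookup q b else 0)"
proof -
  have "p * q = (\<Sum>a\<in>Poly_Mapping.keys p. Poly_Mapping.single a (Poly_Mapping.lookup p a)) *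
                (\<Sum>b\<in>Poly_Mapping.keys q. Poly_Mapping.single b (Poly_Mapping.lookup q b))"
    using poly_as_sum[of p] poly_as_sum[of q] by simp
  also have "\<dots> = (\<Sum>a\<in>Poly_Mapping.keys p. \<Sum>b\<in>Poly_Mapping.keys q.
      Poly_Mapping.single (a + b) (Poly_Mapping.lookup p a * Poly_Mapping.lookup q b))"
    by (simp add: sum_distrib_left sum_distrib_right mult_single) (rule sum.swap)
  finally show ?thesis
    by (simp add: lookup_sum lookup_single when_def)
qed

definition mbnd :: "monom \<Rightarrow> 'a::zero mpoly \<Rightarrow> bool" where
  "mbnd d p \<longleftrightarrow> (\<forall>a\<in>Poly_Mapping.keys p. mge d a)"

lemma lc_nonzero:
  assumes "p \<noteq> 0" shows "Poly_Mapping.lookup p (lead_mon p) \<noteq> 0"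
  using lead_mon_props(1)[OF assms] by (simp add: in_keys_iff)

lemma mbnd_lead: "p \<noteq> 0 \<Longrightarrow> mbnd (lead_mon p) p"
  using lead_mon_props(2) by (auto simp: mbnd_def)

lemma mbnd_mult:
  fixes p q :: "'a::comm_ring_1 mpoly"
  assumes "mbnd d p" "mbnd e q"
  shows "mbnd (d + e) (p * q)"
  unfolding mbnd_def
proof
  fix x assume "x \<in> Poly_Mapping.keys (p * q)"
  then obtain a b where "x = a + b" "a \<in> Poly_Mapping.keys p" "b \<in> Poly_Mapping.keys q"
    using keys_mult[of p q] by blast
  then show "mge (d + e) x" using assms mge_add unfolding mbnd_def by blast
qed

lemma mbnd_add: "mbnd d p \<Longrightarrow> mbnd d q \<Longrightarrow> mbnd d (p + q)"
  using keys_add[of p q] unfolding mbnd_def by blast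

lemma mbnd_diff:
  fixes p q :: "'a::ab_group_add mpoly"
  shows "mbnd d p \<Longrightarrow> mbnd d q \<Longrightarrow> mbnd d (p - q)"
  using keys_diff[of p q] unfolding mbnd_def by blast

lemma mbnd_sum: "(\<And>i. i \<in> A \<Longrightarrow> mbnd d (f i)) \<Longrightarrow> mbnd d (sum f A)"
  using keys_sum[of f A] unfolding mbnd_def by blast

lemma mbnd_mono: "mge e d \<Longrightarrow> mbnd d p \<Longrightarrow> mbnd e p"
  unfolding mbnd_def using mge_trans by blast

lemma lookup_mult_lead:
  fixes p q :: "'a::comm_ring_1 mpoly"
  assumes "p \<noteq> 0" "q \<noteq> 0"
  shows "Poly_Mapping.lookup (p * q) (lead_mon p + lead_mon q) =
         Poly_Mapping.lookup p (lead_mon p) * Poly_Mapping.lookup q (lead_mon q)"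
proof -
  let ?P = "lead_mon p" and ?Q = "lead_mon q"
  have key: "a + b = ?P + ?Q \<longleftrightarrow> a = ?P \<and> b = ?Q"
    if a: "a \<in> Poly_Mapping.keys p" and b: "b \<in> Poly_Mapping.keys q" for a b
  proof
    assume eq: "a + b = ?P + ?Q"
    have ma: "mge ?P a" and mb: "mge ?Q b" using lead_mon_props(2) assms a b by blast+
    show "a = ?P \<and> b = ?Q"
    proof (rule ccontr)
      assume "\<not> (a = ?P \<and> b = ?Q)"
      then have "grevlex_gt ?P a \<or> grevlex_gt ?Q b" using ma mb unfolding mge_def by blast
      then have "grevlex_gt (?P + ?Q) (a + b)"
      proof
        assume "grevlex_gt ?P a"
        then have "grevlex_gt (?P + b) (a + b)" by (rule grevlex_add)
        moreover have "mge (?P + ?Q) (?P + b)" using mge_add[OF mge_refl mb] .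
        ultimately show ?thesis using mge_gt_trans by blast
      next
        assume "grevlex_gt ?Q b"
        then have "grevlex_gt (?P + ?Q) (?P + b)" by (rule grevlex_add_left)
        moreover have "mge (?P + b) (a + b)" using mge_add[OF ma mge_refl] .
        ultimately show ?thesis using gt_mge_trans by blast
      qed
      then show False using eq grevlex_irrefl by metis
    qed
  qed simp
  have "Poly_Mapping.lookup (p * q) (?P + ?Q) =
    (\<Sum>a\<in>Poly_Mapping.keys p. \<Sum>b\<in>Poly_Mapping.keys q.
        if a + b = ?P + ?Q then Poly_Mapping.lookup p a * Poly_Mapping.lookup q b else 0)"
    by (rule lookup_mult_eq)
  also have "\<dots> = (\<Sum>a\<in>Poly_Mapping.keys p. if a = ?P then (\<Sum>b\<in>Poly_Mapping.keys q.
        if b = ?Q then Poly_Mapping.lookup p a * Poly_Mapping.lookup q b else 0) else 0)"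
    by (intro sum.cong refl) (auto simp: key)
  also have "\<dots> = Poly_Mapping.lookup p ?P * Poly_Mapping.lookup q ?Q"
    using lead_mon_props(1)[OF assms(1)] lead_mon_props(1)[OF assms(2)]
    by (simp add: sum.delta')
  finally show ?thesis .
qed

lemma lead_mon_mult:
  fixes p q :: "'a::idom mpoly"
  assumes "p \<noteq> 0" "q \<noteq> 0"
  shows "p * q \<noteq> 0" "lead_mon (p * q) = lead_mon p + lead_mon q"
    "Poly_Mapping.lookup (p * q) (lead_mon (p * q)) =
         Poly_Mapping.lookup p (lead_mon p) * Poly_Mapping.lookup q (lead_mon q)"
proof -
  have l: "Poly_Mapping.lookup (p * q) (lead_mon p + lead_mon q) \<noteq> 0"
    using lookup_mult_lead[OF assms] lc_nonzero[OF assms(1)] lc_nonzero[OF assms(2)] by simp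
  then show "p * q \<noteq> 0" by auto
  have in_k: "lead_mon p + lead_mon q \<in> Poly_Mapping.keys (p * q)" using l by (simp add: in_keys_iff)
  have b: "mbnd (lead_mon p + lead_mon q) (p * q)"
    using mbnd_mult[OF mbnd_lead[OF assms(1)] mbnd_lead[OF assms(2)]] .
  have "\<forall>b\<in>Poly_Mapping.keys (p * q). b \<noteq> lead_mon p + lead_mon q \<longrightarrow> grevlex_gt (lead_mon p + lead_mon q) b"
  proof (intro ballI impI)
    fix b assume "b \<in> Poly_Mapping.keys (p * q)" "b \<noteq> lead_mon p + lead_mon q"
    then show "grevlex_gt (lead_mon p + lead_mon q) b" using b unfolding mbnd_def mge_def by auto
  qed
  then show lm: "lead_mon (p * q) = lead_mon p + lead_mon q" using in_k by (intro lead_mon_eqI)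
  show "Poly_Mapping.lookup (p * q) (lead_mon (p * q)) =
         Poly_Mapping.lookup p (lead_mon p) * Poly_Mapping.lookup q (lead_mon q)"
    unfolding lm by (rule lookup_mult_lead[OF assms])
qed

lemma lead_mon_single:
  assumes "c \<noteq> 0" shows "lead_mon (Poly_Mapping.single N c) = N"
  using assms by (intro lead_mon_eqI) auto

lemma mbnd_strict:
  assumes "mbnd d p" "Poly_Mapping.lookup p d = 0" "a \<in> Poly_Mapping.keys p"
  shows "grevlex_gt d a"
proof -
  have "a \<noteq> d" using assms(2,3) by (auto simp: in_keys_iff)
  then show ?thesis using assms(1,3) unfolding mbnd_def mge_def by auto
qed

section \<open>Variables of a polynomial\<close>

definition pvars :: "'a::zero mpoly \<Rightarrow> var set" where
  "pvars p = (\<Union>a\<in>Poly_Mapping.keys p. Poly_Mapping.keys a)"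

lemma keys_mon_add: "Poly_Mapping.keys ((a::monom) + b) = Poly_Mapping.keys a \<union> Poly_Mapping.keys b"
  by (auto simp: in_keys_iff lookup_add)

lemma pvars_mult:
  fixes p q :: "'a::comm_ring_1 mpoly"
  shows "pvars (p * q) \<subseteq> pvars p \<union> pvars q"
proof
  fix v assume "v \<in> pvars (p * q)"
  then obtain x where x: "x \<in> Poly_Mapping.keys (p * q)" "v \<in> Poly_Mapping.keys x"
    unfolding pvars_def by blast
  then obtain a b where "x = a + b" "a \<in> Poly_Mapping.keys p" "b \<in> Poly_Mapping.keys q"
    using keys_mult[of p q] by blast
  then show "v \<in> pvars p \<union> pvars q" using x(2) keys_mon_add unfolding pvars_def by blast
qed

lemma pvars_add: "pvars (p + q) \<subseteq> pvars p \<union> pvars q"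
  using keys_add[of p q] unfolding pvars_def by blast

lemma pvars_diff:
  fixes p q :: "'a::ab_group_add mpoly"
  shows "pvars (p - q) \<subseteq> pvars p \<union> pvars q"
  using keys_diff[of p q] unfolding pvars_def by blast

lemma pvars_sum: "pvars (sum f A) \<subseteq> (\<Union>i\<in>A. pvars (f i))"
  using keys_sum[of f A] unfolding pvars_def by blast

lemma pvars_single: "pvars (Poly_Mapping.single N c) \<subseteq> Poly_Mapping.keys N"
  unfolding pvars_def by auto

lemma finite_pvars: "finite (pvars p)"
  unfolding pvars_def by simp

lemma finite_mon_set:
  assumes "finite V"
  shows "finite {a::monom. Poly_Mapping.keys a \<subseteq> V \<and> mdeg a \<le> D}"
proof -
  let ?S = "{f::var\<Rightarrow>nat. \<forall>x. (x \<in> V \<longrightarrow> f x \<in> {..D}) \<and> (x \<notin> V \<longrightarrow> f x = 0)}"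
  have fin: "finite ?S" using assms by (intro finite_set_of_finite_funs) auto
  have "{a::monom. Poly_Mapping.keys a \<subseteq> V \<and> mdeg a \<le> D} \<subseteq> Poly_Mapping.lookup -` ?S"
  proof
    fix a :: monom assume a: "a \<in> {a. Poly_Mapping.keys a \<subseteq> V \<and> mdeg a \<le> D}"
    have "Poly_Mapping.lookup a x \<le> D" for x
    proof (cases "x \<in> Poly_Mapping.keys a")
      case True
      have "Poly_Mapping.lookup a x \<le> mdeg a" unfolding mdeg_def
        using True by (intro member_le_sum) auto
      then show ?thesis using a by simp
    qed (simp add: in_keys_iff)
    moreover have "x \<notin> V \<Longrightarrow> Poly_Mapping.lookup a x = 0" for x
      using a by (auto simp: in_keys_iff)
    ultimately show "a \<in> Poly_Mapping.lookup -` ?S" by auto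
  qed
  moreover have "finite (Poly_Mapping.lookup -` ?S)"
    using fin by (rule finite_vimageI) (simp add: inj_def poly_mapping_eqI)
  ultimately show ?thesis by (rule finite_subset)
qed



lemma Q_facts:
  fixes c :: "'a::field mpoly \<Rightarrow> 'a mpoly"
  assumes "g \<in> F" "0 \<notin> F" "\<forall>g\<in>F. mbnd d (c g * g)"
    "Poly_Mapping.lookup (c g * g) d \<noteq> 0"
  shows "c g \<noteq> 0" "g \<noteq> 0" "lead_mon (c g) + lead_mon g = d"
proof -
  show cg: "c g \<noteq> 0" using assms(4) by auto
  show g: "g \<noteq> 0" using assms(1,2) by auto
  have lm: "lead_mon (c g * g) = lead_mon (c g) + lead_mon g" using lead_mon_mult[OF cg g] by simp
  have "d \<in> Poly_Mapping.keys (c g * g)" using assms(4) by (simp add: in_keys_iff)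
  then have 1: "mge (lead_mon (c g * g)) d" using lead_mon_props(2) lead_mon_mult(1)[OF cg g] by blast
  have 2: "mge d (lead_mon (c g * g))"
    using assms(1,3) lead_mon_props(1)[OF lead_mon_mult(1)[OF cg g]] unfolding mbnd_def by blast
  show "lead_mon (c g) + lead_mon g = d" using mge_antisym[OF 2 1] lm by simp
qed

lemma descent_step:
  fixes F :: "'a::field mpoly set" and c :: "'a mpoly \<Rightarrow> 'a mpoly"
  assumes fin: "finite F" and nz: "0 \<notin> F"
    and cop: "\<And>g h. g\<in>F \<Longrightarrow> h\<in>F \<Longrightarrow> g\<noteq>h \<Longrightarrow>
        Poly_Mapping.keys (lead_mon g) \<inter> Poly_Mapping.keys (lead_mon h) = {}"
    and fdef: "f = (\<Sum>g\<in>F. c g * g)"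
    and bnd: "\<forall>g\<in>F. mbnd d (c g * g)"
    and Vg: "\<And>g. g\<in>F \<Longrightarrow> pvars g \<subseteq> V" and Vc: "\<forall>g\<in>F. pvars (c g * g) \<subseteq> V"
    and Vd: "Poly_Mapping.keys d \<subseteq> V"
    and f0: "Poly_Mapping.lookup f d = 0"
  shows "\<exists>c'. f = (\<Sum>g\<in>F. c' g * g) \<and> (\<forall>g\<in>F. \<forall>a\<in>Poly_Mapping.keys (c' g * g). grevlex_gt d a)
             \<and> (\<forall>g\<in>F. pvars (c' g * g) \<subseteq> V)"
proof -
  define Q where "Q = {g\<in>F. Poly_Mapping.lookup (c g * g) d \<noteq> 0}"
  have QF: "Q \<subseteq> F" by (auto simp: Q_def)
  show ?thesis
  proof (cases "Q = {}")
    case True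
    then have "\<forall>g\<in>F. Poly_Mapping.lookup (c g * g) d = 0" by (auto simp: Q_def)
    then have "\<forall>g\<in>F. \<forall>a\<in>Poly_Mapping.keys (c g * g). grevlex_gt d a"
      using bnd mbnd_strict by blast
    then show ?thesis using fdef Vc by blast
  next
    case False
    then obtain g0 where g0Q: "g0 \<in> Q" by blast
    have hQ: "g \<in> F \<and> c g \<noteq> 0 \<and> g \<noteq> 0 \<and> lead_mon (c g) + lead_mon g = d" if "g \<in> Q" for g
      using Q_facts[of g F d c] that nz bnd unfolding Q_def by blast
    have g0F: "g0 \<in> F" and cg0: "c g0 \<noteq> 0" and g0nz: "g0 \<noteq> 0"
      and dg0: "lead_mon (c g0) + lead_mon g0 = d" using hQ[OF g0Q] by auto
    define N where "N g = lead_mon (c g) - lead_mon g0" for g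
    define t where "t g = Poly_Mapping.single (N g)
       (Poly_Mapping.lookup (c g) (lead_mon (c g)) / Poly_Mapping.lookup g0 (lead_mon g0))" for g
    define c' where "c' g = (if g \<in> Q - {g0} then c g - t g * g0
       else if g = g0 then c g0 + (\<Sum>h\<in>Q-{g0}. t h * h) else c g)" for g
    have Nadd: "N g + lead_mon g0 = lead_mon (c g)" if gQ: "g \<in> Q - {g0}" for g
    proof -
      have gF: "g \<in> F" and dg: "lead_mon (c g) + lead_mon g = d" using hQ gQ by auto
      have le: "Poly_Mapping.lookup (lead_mon g0) v \<le> Poly_Mapping.lookup (lead_mon (c g)) v" for v
      proof (cases "Poly_Mapping.lookup (lead_mon g0) v = 0")
        case False
        then have "v \<in> Poly_Mapping.keys (lead_mon g0)" by (simp add: in_keys_iff)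
        then have "v \<notin> Poly_Mapping.keys (lead_mon g)" using cop[OF g0F gF] gQ by auto
        then have "Poly_Mapping.lookup (lead_mon g) v = 0" by (simp add: in_keys_iff)
        moreover have "Poly_Mapping.lookup d v = Poly_Mapping.lookup (lead_mon (c g)) v + Poly_Mapping.lookup (lead_mon g) v"
          using dg by (auto simp: lookup_add)
        moreover have "Poly_Mapping.lookup d v = Poly_Mapping.lookup (lead_mon (c g0)) v + Poly_Mapping.lookup (lead_mon g0) v"
          using dg0 by (auto simp: lookup_add)
        ultimately show ?thesis by linarith
      qed simp
      show ?thesis unfolding N_def
        by (rule poly_mapping_eqI) (simp add: lookup_add lookup_minus le)
    qed
    have tprops: "mbnd d (t g * (g0 * g)) \<and> Poly_Mapping.lookup (t g * (g0 * g)) d = Poly_Mapping.lookup (c g * g) d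
        \<and> pvars (t g * (g0 * g)) \<subseteq> V" if gQ: "g \<in> Q - {g0}" for g
    proof -
      have gF: "g \<in> F" and cg: "c g \<noteq> 0" and gnz: "g \<noteq> 0" and dg: "lead_mon (c g) + lead_mon g = d"
        using hQ gQ by auto
      have coef: "Poly_Mapping.lookup (c g) (lead_mon (c g)) / Poly_Mapping.lookup g0 (lead_mon g0) \<noteq> 0"
        using lc_nonzero[OF cg] lc_nonzero[OF g0nz] by simp
      then have tnz: "t g \<noteq> 0" unfolding t_def by (metis lookup_single_eq lookup_zero)
      have ltg: "lead_mon (t g) = N g" unfolding t_def using lead_mon_single[OF coef] .
      have lct: "Poly_Mapping.lookup (t g) (lead_mon (t g)) =
          Poly_Mapping.lookup (c g) (lead_mon (c g)) / Poly_Mapping.lookup g0 (lead_mon g0)"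
        unfolding ltg unfolding t_def by simp
      have pnz: "g0 * g \<noteq> 0" using lead_mon_mult(1)[OF g0nz gnz] .
      have lmt: "lead_mon (t g * (g0 * g)) = d"
        using lead_mon_mult(2)[OF tnz pnz] lead_mon_mult(2)[OF g0nz gnz] ltg Nadd[OF gQ] dg
        by (simp add: add.assoc[symmetric])
      have nz2: "t g * (g0 * g) \<noteq> 0" using lead_mon_mult(1)[OF tnz pnz] .
      have "Poly_Mapping.lookup (t g * (g0 * g)) d =
          Poly_Mapping.lookup (t g) (lead_mon (t g)) * (Poly_Mapping.lookup g0 (lead_mon g0) * Poly_Mapping.lookup g (lead_mon g))"
        using lead_mon_mult(3)[OF tnz pnz] lead_mon_mult(3)[OF g0nz gnz] lmt by simp
      also have "\<dots> = Poly_Mapping.lookup (c g) (lead_mon (c g)) * Poly_Mapping.lookup g (lead_mon g)"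
        unfolding lct using lc_nonzero[OF g0nz] by simp
      also have "\<dots> = Poly_Mapping.lookup (c g * g) d"
        using lead_mon_mult(3)[OF cg gnz] lead_mon_mult(2)[OF cg gnz] dg by simp
      finally have l: "Poly_Mapping.lookup (t g * (g0 * g)) d = Poly_Mapping.lookup (c g * g) d" .
      have b: "mbnd d (t g * (g0 * g))" using mbnd_lead[OF nz2] lmt by simp
      have "Poly_Mapping.keys (N g) \<subseteq> Poly_Mapping.keys (lead_mon (c g))"
        unfolding N_def by (auto simp: in_keys_iff lookup_minus)
      also have "\<dots> \<subseteq> Poly_Mapping.keys d" using dg keys_mon_add by blast
      finally have "pvars (t g) \<subseteq> V" using Vd pvars_single[of "N g"] unfolding t_def by blast
      then have "pvars (t g * (g0 * g)) \<subseteq> V"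
        using pvars_mult[of "t g" "g0 * g"] pvars_mult[of g0 g] Vg[OF g0F] Vg[OF gF] by blast
      then show ?thesis using b l by blast
    qed
    have prod_eq: "c' g * g = c g * g - (if g \<in> Q - {g0} then t g * (g0 * g) else 0)
        + (if g = g0 then (\<Sum>h\<in>Q-{g0}. t h * (g0 * h)) else 0)" for g
    proof -
      have "(\<Sum>h\<in>Q-{g0}. t h * h) * g0 = (\<Sum>h\<in>Q-{g0}. t h * (g0 * h))"
        unfolding sum_distrib_right by (rule sum.cong) (simp_all add: ac_simps)
      then show ?thesis unfolding c'_def by (auto simp: algebra_simps)
    qed
    have sum_eq: "f = (\<Sum>g\<in>F. c' g * g)"
    proof -
      have "(\<Sum>g\<in>F. c' g * g) = (\<Sum>g\<in>F. c g * g) - (\<Sum>g\<in>F. (if g \<in> Q - {g0} then t g * (g0 * g) else 0))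
          + (\<Sum>g\<in>F. (if g = g0 then (\<Sum>h\<in>Q-{g0}. t h * (g0 * h)) else 0))"
        unfolding prod_eq by (simp add: sum.distrib sum_subtractf)
      also have "(\<Sum>g\<in>F. (if g \<in> Q - {g0} then t g * (g0 * g) else 0)) = (\<Sum>g\<in>Q - {g0}. t g * (g0 * g))"
        using fin QF by (simp add: sum.If_cases) (rule sum.cong, auto)
      also have "(\<Sum>g\<in>F. (if g = g0 then (\<Sum>h\<in>Q-{g0}. t h * (g0 * h)) else 0)) = (\<Sum>h\<in>Q-{g0}. t h * (g0 * h))"
        using fin g0F by (simp add: sum.delta')
      finally show ?thesis using fdef by simp
    qed
    have bnd': "mbnd d (c' g * g)" if "g \<in> F" for g
    proof -
      have b1: "mbnd d (c g * g)" using bnd that by blast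
      have "mbnd d (if g \<in> Q - {g0} then t g * (g0 * g) else 0)"
        using tprops by (auto simp: mbnd_def)
      moreover have "mbnd d (\<Sum>h\<in>Q-{g0}. t h * (g0 * h))"
        using tprops by (intro mbnd_sum) blast
      then have "mbnd d (if g = g0 then (\<Sum>h\<in>Q-{g0}. t h * (g0 * h)) else 0)"
        by (auto simp: mbnd_def)
      ultimately show ?thesis unfolding prod_eq using b1 by (intro mbnd_add mbnd_diff)
    qed
    have zero': "Poly_Mapping.lookup (c' g * g) d = 0" if "g \<in> F" "g \<noteq> g0" for g
    proof (cases "g \<in> Q")
      case True
      then show ?thesis unfolding prod_eq using that tprops[of g] by (simp add: lookup_add lookup_minus)
    next
      case False
      then show ?thesis unfolding prod_eq using that by (simp add: Q_def)
    qed
    have "Poly_Mapping.lookup f d = (\<Sum>g\<in>F. Poly_Mapping.lookup (c' g * g) d)"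
      unfolding sum_eq by (simp add: lookup_sum)
    also have "\<dots> = Poly_Mapping.lookup (c' g0 * g0) d + (\<Sum>g\<in>F - {g0}. Poly_Mapping.lookup (c' g * g) d)"
      using fin g0F by (simp add: sum.remove)
    also have "(\<Sum>g\<in>F - {g0}. Poly_Mapping.lookup (c' g * g) d) = 0"
      using zero' by (intro sum.neutral) auto
    finally have zero0: "Poly_Mapping.lookup (c' g0 * g0) d = 0" using f0 by simp
    have strict: "\<forall>g\<in>F. \<forall>a\<in>Poly_Mapping.keys (c' g * g). grevlex_gt d a"
    proof (intro ballI)
      fix g a assume g: "g \<in> F" and a: "a \<in> Poly_Mapping.keys (c' g * g)"
      have "Poly_Mapping.lookup (c' g * g) d = 0" using zero' zero0 g by (cases "g = g0") auto
      then show "grevlex_gt d a" using mbnd_strict[OF bnd'[OF g]] a by blast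
    qed
    have pv: "pvars (c' g * g) \<subseteq> V" if g: "g \<in> F" for g
    proof -
      have p1: "pvars (c g * g) \<subseteq> V" using Vc g by blast
      have p2: "pvars (if g \<in> Q - {g0} then t g * (g0 * g) else 0) \<subseteq> V"
        using tprops by (auto simp: pvars_def)
      have "pvars (\<Sum>h\<in>Q-{g0}. t h * (g0 * h)) \<subseteq> V"
        using pvars_sum[of "\<lambda>h. t h * (g0 * h)" "Q - {g0}"] tprops by blast
      then have p3: "pvars (if g = g0 then (\<Sum>h\<in>Q-{g0}. t h * (g0 * h)) else 0) \<subseteq> V"
        by (auto simp: pvars_def)
      show ?thesis unfolding prod_eq
        using pvars_add pvars_diff p1 p2 p3 by blast
    qed
    show ?thesis using sum_eq strict pv by blast
  qed
qed



lemma descent: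
  fixes F :: "'a::field mpoly set"
  assumes fin: "finite F" and nz: "0 \<notin> F"
    and cop: "\<And>g h. g\<in>F \<Longrightarrow> h\<in>F \<Longrightarrow> g\<noteq>h \<Longrightarrow>
        Poly_Mapping.keys (lead_mon g) \<inter> Poly_Mapping.keys (lead_mon h) = {}"
    and fnz: "f \<noteq> 0" and finV: "finite V"
    and Vg: "\<And>g. g\<in>F \<Longrightarrow> pvars g \<subseteq> V"
  shows "Poly_Mapping.keys d \<subseteq> V \<Longrightarrow> mdeg d \<le> D \<Longrightarrow> f = (\<Sum>g\<in>F. c g * g) \<Longrightarrow> \<forall>g\<in>F. mbnd d (c g * g)
    \<Longrightarrow> \<forall>g\<in>F. pvars (c g * g) \<subseteq> V \<Longrightarrow> \<exists>g\<in>F. mon_dvd (lead_mon g) (lead_mon f)"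
proof -
  define M where "M = {a::monom. Poly_Mapping.keys a \<subseteq> V \<and> mdeg a \<le> D}"
  define R where "R = {(a, b). a \<in> M \<and> b \<in> M \<and> grevlex_gt b a}"
  have finM: "finite M" unfolding M_def using finite_mon_set[OF finV] .
  have "finite R"
    by (rule finite_subset[of _ "M \<times> M"]) (auto simp: R_def finM)
  moreover have "acyclic R"
  proof -
    have tr: "trans R" unfolding R_def trans_def using grevlex_trans by blast
    have "R\<^sup>+ = R" using trancl_id[OF tr] .
    then show ?thesis unfolding acyclic_def R_def using grevlex_irrefl by auto
  qed
  ultimately have wfR: "wf R" by (rule finite_acyclic_wf)
  have main: "\<forall>c. d \<in> M \<longrightarrow> f = (\<Sum>g\<in>F. c g * g) \<longrightarrow> (\<forall>g\<in>F. mbnd d (c g * g))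
    \<longrightarrow> (\<forall>g\<in>F. pvars (c g * g) \<subseteq> V) \<longrightarrow> (\<exists>g\<in>F. mon_dvd (lead_mon g) (lead_mon f))" for d
  proof (induction d rule: wf_induct[OF wfR])
    case (1 d)
    show ?case
    proof (intro allI impI)
      fix c assume dM: "d \<in> M" and fdef: "f = (\<Sum>g\<in>F. c g * g)"
        and bnd: "\<forall>g\<in>F. mbnd d (c g * g)" and Vc: "\<forall>g\<in>F. pvars (c g * g) \<subseteq> V"
      have keysf: "Poly_Mapping.keys f \<subseteq> (\<Union>g\<in>F. Poly_Mapping.keys (c g * g))"
        unfolding fdef by (rule keys_sum)
      show "\<exists>g\<in>F. mon_dvd (lead_mon g) (lead_mon f)"
      proof (cases "Poly_Mapping.lookup f d = 0")
        case False
        have "(\<Sum>g\<in>F. Poly_Mapping.lookup (c g * g) d) \<noteq> 0"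
          using False unfolding fdef by (simp add: lookup_sum)
        then obtain g where gF: "g \<in> F" and gd: "Poly_Mapping.lookup (c g * g) d \<noteq> 0"
          by (meson sum.not_neutral_contains_not_neutral)
        have dsum: "lead_mon (c g) + lead_mon g = d" using Q_facts(3)[OF gF nz bnd gd] .
        have "lead_mon f = d"
        proof (rule lead_mon_eqI)
          show "d \<in> Poly_Mapping.keys f" using False by (simp add: in_keys_iff)
          show "\<forall>b\<in>Poly_Mapping.keys f. b \<noteq> d \<longrightarrow> grevlex_gt d b"
          proof (intro ballI impI)
            fix b assume "b \<in> Poly_Mapping.keys f" "b \<noteq> d"
            then obtain h where "h \<in> F" "b \<in> Poly_Mapping.keys (c h * h)" using keysf by blast
            then have "mge d b" using bnd unfolding mbnd_def by blast
            then show "grevlex_gt d b" using \<open>b \<noteq> d\<close> unfolding mge_def by simp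
          qed
        qed
        moreover have "mon_dvd (lead_mon g) d"
          unfolding mon_dvd_def dsum[symmetric] by (simp add: lookup_add)
        ultimately show ?thesis using gF by auto
      next
        case True
        have Vd: "Poly_Mapping.keys d \<subseteq> V" using dM by (simp add: M_def)
        obtain c' where c': "f = (\<Sum>g\<in>F. c' g * g)"
          "\<forall>g\<in>F. \<forall>a\<in>Poly_Mapping.keys (c' g * g). grevlex_gt d a"
          "\<forall>g\<in>F. pvars (c' g * g) \<subseteq> V"
          using descent_step[OF fin nz cop fdef bnd Vg Vc Vd True] by blast
        define K where "K = (\<Union>g\<in>F. Poly_Mapping.keys (c' g * g))"
        have "Poly_Mapping.keys f \<subseteq> K" unfolding K_def c'(1) by (rule keys_sum)
        moreover have "Poly_Mapping.keys f \<noteq> {}" using fnz by simp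
        ultimately have Kne: "K \<noteq> {}" by blast
        have Kfin: "finite K" unfolding K_def using fin by simp
        obtain d' where d': "d' \<in> K" "\<forall>b\<in>K. mge d' b" using mon_max[OF Kfin Kne] by blast
        obtain g1 where g1: "g1 \<in> F" "d' \<in> Poly_Mapping.keys (c' g1 * g1)" using d'(1) K_def by blast
        have gt: "grevlex_gt d d'" using c'(2) g1 by blast
        have "Poly_Mapping.keys d' \<subseteq> V" using c'(3) g1 unfolding pvars_def by blast
        moreover have "mdeg d' \<le> D" using gt dM mge_mdeg[of d d'] unfolding M_def mge_def by auto
        ultimately have d'M: "d' \<in> M" by (simp add: M_def)
        then have "(d', d) \<in> R" using dM gt by (simp add: R_def)
        moreover have "\<forall>g\<in>F. mbnd d' (c' g * g)" using d'(2) unfolding K_def mbnd_def by blast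
        ultimately show ?thesis using 1 d'M c'(1) c'(3) by blast
      qed
    qed
  qed
  assume "Poly_Mapping.keys d \<subseteq> V" "mdeg d \<le> D" "f = (\<Sum>g\<in>F. c g * g)" "\<forall>g\<in>F. mbnd d (c g * g)"
    "\<forall>g\<in>F. pvars (c g * g) \<subseteq> V"
  then show "\<exists>g\<in>F. mon_dvd (lead_mon g) (lead_mon f)" using main[of d] by (simp add: M_def)
qed

lemma coprime_GB:
  fixes G :: "'a::field mpoly set"
  assumes nz: "0 \<notin> G"
    and cop: "\<And>g h. g\<in>G \<Longrightarrow> h\<in>G \<Longrightarrow> g\<noteq>h \<Longrightarrow>
        Poly_Mapping.keys (lead_mon g) \<inter> Poly_Mapping.keys (lead_mon h) = {}"
    and fI: "f \<in> ideal_gen G" and fnz: "f \<noteq> 0"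
  shows "\<exists>g\<in>G. mon_dvd (lead_mon g) (lead_mon f)"
proof -
  obtain F c where F: "finite F" "F \<subseteq> G" and fdef: "f = (\<Sum>g\<in>F. c g * g)"
    using fI unfolding ideal_gen_def by blast
  define V where "V = (\<Union>g\<in>F. pvars g) \<union> (\<Union>g\<in>F. pvars (c g * g))"
  have finV: "finite V" unfolding V_def using F(1) finite_pvars by blast
  define K where "K = (\<Union>g\<in>F. Poly_Mapping.keys (c g * g))"
  have "Poly_Mapping.keys f \<subseteq> K" unfolding K_def fdef by (rule keys_sum)
  moreover have "Poly_Mapping.keys f \<noteq> {}" using fnz by simp
  ultimately have Kne: "K \<noteq> {}" by blast
  have Kfin: "finite K" unfolding K_def using F(1) by simp
  obtain d where d: "d \<in> K" "\<forall>b\<in>K. mge d b" using mon_max[OF Kfin Kne] by blast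
  obtain g1 where g1: "g1 \<in> F" "d \<in> Poly_Mapping.keys (c g1 * g1)" using d(1) K_def by blast
  have Vd: "Poly_Mapping.keys d \<subseteq> V" using g1 unfolding V_def pvars_def by blast
  have "\<exists>g\<in>F. mon_dvd (lead_mon g) (lead_mon f)"
  proof (rule descent[OF F(1) _ _ fnz finV _ Vd order_refl fdef])
    show "0 \<notin> F" using nz F(2) by blast
    show "\<And>g h. g\<in>F \<Longrightarrow> h\<in>F \<Longrightarrow> g\<noteq>h \<Longrightarrow>
        Poly_Mapping.keys (lead_mon g) \<inter> Poly_Mapping.keys (lead_mon h) = {}"
      using cop F(2) by blast
    show "\<And>g. g \<in> F \<Longrightarrow> pvars g \<subseteq> V" unfolding V_def by blast
    show "\<forall>g\<in>F. mbnd d (c g * g)" using d(2) unfolding K_def mbnd_def by blast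
    show "\<forall>g\<in>F. pvars (c g * g) \<subseteq> V" unfolding V_def by blast
  qed
  then show ?thesis using F(2) by blast
qed



definition Tm :: "nat \<Rightarrow> (nat \<Rightarrow> nat) \<Rightarrow> (nat \<Rightarrow> nat) \<Rightarrow> monom" where
  "Tm m p l = (\<Sum>i\<in>{1..m}. Poly_Mapping.single (l i, i, p i) 1)"

lemma lookup_Tm:
  "Poly_Mapping.lookup (Tm m p l) (a, i, j) = (if i \<in> {1..m} \<and> a = l i \<and> j = p i then 1 else 0)"
proof -
  have "Poly_Mapping.lookup (Tm m p l) (a, i, j) =
      (\<Sum>i'\<in>{1..m}. if i' = i then (if a = l i \<and> j = p i then 1 else 0) else 0)"
    unfolding Tm_def lookup_sum by (intro sum.cong refl) (auto simp: lookup_single when_def)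
  also have "\<dots> = (if i \<in> {1..m} \<and> a = l i \<and> j = p i then 1 else 0)"
    by (simp add: sum.delta')
  finally show ?thesis .
qed

lemma mdeg_Tm: "mdeg (Tm m p l) = m"
  unfolding Tm_def mdeg_sum by simp

lemma Tm_cong: "(\<And>i. i \<in> {1..m} \<Longrightarrow> l i = l' i) \<Longrightarrow> (\<And>i. i \<in> {1..m} \<Longrightarrow> p i = p' i) \<Longrightarrow>
   Tm m p l = Tm m p' l'"
  unfolding Tm_def by (intro sum.cong) auto

lemma prod_monom:
  fixes c :: "'b \<Rightarrow> 'a::comm_semiring_1"
  shows "finite A \<Longrightarrow> (\<Prod>i\<in>A. monom (c i) (n i)) = monom (\<Prod>i\<in>A. c i) (\<Sum>i\<in>A. n i)"
  by (induction A rule: finite_induct) (simp_all add: mult_monom monom_0 one_pCons)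

lemma prod_single:
  fixes b :: "'b \<Rightarrow> 'a::comm_semiring_1"
  shows "finite A \<Longrightarrow> (\<Prod>i\<in>A. Poly_Mapping.single (a i) (b i)) =
      Poly_Mapping.single (\<Sum>i\<in>A. a i) (\<Prod>i\<in>A. b i)"
  by (induction A rule: finite_induct) (simp_all add: mult_single)

lemma prod_Xvar:
  "(\<Prod>i\<in>{1..m}. Xvar (l i) i (p i) :: 'a::comm_ring_1 mpoly) = Poly_Mapping.single (Tm m p l) 1"
  unfolding Xvar_def Tm_def by (simp add: prod_single)

definition Ls :: "nat \<Rightarrow> nat \<Rightarrow> (nat \<Rightarrow> nat) set" where
  "Ls m k = PiE {1..m} (\<lambda>_. {..<k})"

lemma finite_Ls: "finite (Ls m k)"
  unfolding Ls_def by (simp add: finite_PiE)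

lemma detX_expand:
  "(detX m k :: 'a::comm_ring_1 mpoly poly) = (\<Sum>p\<in>{p. p permutes {1..m}}. \<Sum>l\<in>Ls m k.
      monom (Poly_Mapping.single (Tm m p l) (of_int (sign p))) (\<Sum>i\<in>{1..m}. l i))"
proof -
  have "(\<Prod>i\<in>{1..m}. xt k i (p i) :: 'a mpoly poly) =
      (\<Sum>l\<in>Ls m k. monom (Poly_Mapping.single (Tm m p l) 1) (\<Sum>i\<in>{1..m}. l i))" for p
  proof -
    have "(\<Prod>i\<in>{1..m}. xt k i (p i) :: 'a mpoly poly) =
        (\<Sum>l\<in>Ls m k. \<Prod>i\<in>{1..m}. monom (Xvar (l i) i (p i)) (l i))"
      unfolding xt_def Ls_def by (rule prod_sum_PiE) auto
    also have "\<dots> = (\<Sum>l\<in>Ls m k. monom (Poly_Mapping.single (Tm m p l) 1) (\<Sum>i\<in>{1..m}. l i))"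
      by (intro sum.cong refl) (simp only: prod_monom[OF finite_atLeastAtMost] prod_Xvar)
    finally show ?thesis .
  qed
  moreover have "(of_int (sign p) :: 'a mpoly poly) * monom (Poly_Mapping.single T 1) n =
      monom (Poly_Mapping.single T (of_int (sign p))) n" for p :: "nat \<Rightarrow> nat" and T n
    by (simp add: of_int_poly monom_0[symmetric] mult_monom mult_single flip: single_of_int)
  ultimately show ?thesis
    unfolding detX_def by (simp add: sum_distrib_left)
qed

lemma dcoef_expand:
  "(dcoef m k q :: 'a::comm_ring_1 mpoly) = (\<Sum>p\<in>{p. p permutes {1..m}}. \<Sum>l\<in>Ls m k.
      if (\<Sum>i\<in>{1..m}. l i) = q then Poly_Mapping.single (Tm m p l) (of_int (sign p)) else 0)"
  unfolding dcoef_def detX_expand by (simp add: coeff_sum)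

lemma lookup_dcoef:
  "Poly_Mapping.lookup (dcoef m k q :: 'a::comm_ring_1 mpoly) M = (\<Sum>p\<in>{p. p permutes {1..m}}. \<Sum>l\<in>Ls m k.
      if (\<Sum>i\<in>{1..m}. l i) = q \<and> Tm m p l = M then of_int (sign p) else 0)"
  unfolding dcoef_expand lookup_sum by (intro sum.cong refl) (auto simp: lookup_single when_def)



lemma Tm_max:
  assumes p: "p permutes {1..m}" and sumeq: "(\<Sum>i\<in>{1..m}. l i) = (\<Sum>i\<in>{1..m}. ls i)"
    and mono: "\<And>i j. i \<in> {1..m} \<Longrightarrow> j \<in> {1..m} \<Longrightarrow> i \<le> j \<Longrightarrow> ls i \<le> ls j"
    and rng: "\<And>i j. i \<in> {1..m} \<Longrightarrow> j \<in> {1..m} \<Longrightarrow> ls i \<le> ls j + 1"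
    and cover: "\<And>i0 c. i0 \<in> {1..m} \<Longrightarrow> 1 \<le> c \<Longrightarrow> c < ps i0 \<Longrightarrow>
        \<exists>i'\<in>{1..m}. ps i' = c \<and> (ls i' < ls i0 \<or> (ls i' = ls i0 \<and> i0 < i'))"
    and ne: "Tm m p l \<noteq> Tm m ps ls"
  shows "grevlex_gt (Tm m ps ls) (Tm m p l)"
proof -
  define T where "T = Tm m p l"
  define S where "S = Tm m ps ls"
  have "dset S T \<noteq> {}" using ne dset_empty unfolding S_def T_def by metis
  then obtain u where u: "u \<in> dset S T" "\<forall>w\<in>dset S T. w \<noteq> u \<longrightarrow> var_gt w u"
    using var_min[OF finite_dset] by blast
  have below: "Poly_Mapping.lookup S w = Poly_Mapping.lookup T w" if w: "var_gt u w" for w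
  proof (rule ccontr)
    assume "Poly_Mapping.lookup S w \<noteq> Poly_Mapping.lookup T w"
    then have "w \<in> dset S T" by (simp add: dset_def)
    moreover have "w \<noteq> u" using w var_gt_irrefl by blast
    ultimately have "var_gt w u" using u by blast
    then show False using w var_gt_asym by blast
  qed
  obtain a i0 j where uu: "u = (a, i0, j)" by (cases u) auto
  have diff: "Poly_Mapping.lookup S u \<noteq> Poly_Mapping.lookup T u" using u(1) by (simp add: dset_def)
  have lt: "Poly_Mapping.lookup S u < Poly_Mapping.lookup T u"
  proof (rule ccontr)
    assume "\<not> ?thesis"
    then have "Poly_Mapping.lookup T u < Poly_Mapping.lookup S u" using diff by linarith
    moreover have "Poly_Mapping.lookup S u \<le> 1" unfolding S_def uu lookup_Tm by simp
    ultimately have Su: "Poly_Mapping.lookup S u = 1" and Tu: "Poly_Mapping.lookup T u = 0"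
      by linarith+
    have "i0 \<in> {1..m} \<and> a = ls i0 \<and> j = ps i0"
    proof (rule ccontr)
      assume "\<not> (i0 \<in> {1..m} \<and> a = ls i0 \<and> j = ps i0)"
      then have "Poly_Mapping.lookup S u = 0" unfolding S_def uu lookup_Tm by (simp only: if_False)
      then show False using Su by simp
    qed
    then have i0: "i0 \<in> {1..m}" and a: "a = ls i0" and j: "j = ps i0" by auto
    have inS: "Poly_Mapping.lookup S (ls i, i, ps i) = 1" if "i \<in> {1..m}" for i
      unfolding S_def lookup_Tm using that by simp
    have inT: "Poly_Mapping.lookup T (l i, i, p i) = 1" if "i \<in> {1..m}" for i
      unfolding T_def lookup_Tm using that by simp
    have S1: "b = ls i \<and> c = ps i" if "i \<in> {1..m}" "Poly_Mapping.lookup S (b, i, c) = 1" for b i c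
    proof (rule ccontr)
      assume "\<not> (b = ls i \<and> c = ps i)"
      then have "Poly_Mapping.lookup S (b, i, c) = 0" unfolding S_def lookup_Tm by auto
      then show False using that by simp
    qed
    have T1: "b = l i \<and> c = p i" if "i \<in> {1..m}" "Poly_Mapping.lookup T (b, i, c) = 1" for b i c
    proof (rule ccontr)
      assume "\<not> (b = l i \<and> c = p i)"
      then have "Poly_Mapping.lookup T (b, i, c) = 0" unfolding T_def lookup_Tm by auto
      then show False using that by simp
    qed
    have ge: "ls i \<le> l i" if i: "i \<in> {1..m}" for i
    proof (rule ccontr)
      assume "\<not> ls i \<le> l i"
      then have li: "l i < ls i" by simp
      have vg: "var_gt u (l i, i, p i)"
      proof (cases "l i < ls i0")
        case True then show ?thesis unfolding uu a var_gt_def by simp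
      next
        case False
        have "ls i0 < ls i" using False li by simp
        then have "i0 < i" using mono[OF i i0] by (meson not_le)
        moreover have "l i = ls i0" using False li rng[OF i i0] by simp
        ultimately show ?thesis unfolding uu a var_gt_def by simp
      qed
      have "Poly_Mapping.lookup S (l i, i, p i) = 1" using below[OF vg] inT[OF i] by simp
      then have "l i = ls i" using S1[OF i] by blast
      then show False using li by simp
    qed
    have leq: "l i = ls i" if i: "i \<in> {1..m}" for i
    proof (rule ccontr)
      assume "l i \<noteq> ls i"
      then have "ls i < l i" using ge[OF i] by simp
      then have "(\<Sum>i\<in>{1..m}. ls i) < (\<Sum>i\<in>{1..m}. l i)"
        using i ge by (intro sum_strict_mono_ex1) auto
      then show False using sumeq by simp
    qed
    have pne: "p i0 \<noteq> ps i0"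
    proof
      assume "p i0 = ps i0"
      then have "Poly_Mapping.lookup T u = 1" unfolding uu a j T_def lookup_Tm using i0 leq[OF i0] by simp
      then show False using Tu by simp
    qed
    have plt: "p i0 < ps i0"
    proof (rule ccontr)
      assume "\<not> p i0 < ps i0"
      then have "ps i0 < p i0" using pne by simp
      then have vg: "var_gt u (ls i0, i0, p i0)" unfolding uu a j var_gt_def by simp
      have "Poly_Mapping.lookup T (ls i0, i0, p i0) = 1" using inT[OF i0] leq[OF i0] by simp
      then have "Poly_Mapping.lookup S (ls i0, i0, p i0) = 1" using below[OF vg] by simp
      then show False using S1[OF i0] pne by simp
    qed
    have "p i0 \<in> {1..m}" using permutes_in_image[OF p] i0 by simp
    then have "1 \<le> p i0" by simp
    then obtain i' where i': "i' \<in> {1..m}" "ps i' = p i0" "ls i' < ls i0 \<or> (ls i' = ls i0 \<and> i0 < i')"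
      using cover[OF i0 _ plt] by blast
    have vg: "var_gt u (ls i', i', ps i')" unfolding uu a var_gt_def using i'(3) by auto
    have "Poly_Mapping.lookup T (ls i', i', ps i') = 1" using below[OF vg] inS[OF i'(1)] by simp
    then have "p i' = ps i'" using T1[OF i'(1)] by metis
    then have "p i' = p i0" using i'(2) by simp
    moreover have "i' \<noteq> i0" using i'(2) pne by auto
    ultimately show False
      using permutes_inj[OF p] unfolding inj_def by blast
  qed
  have "grevlex_gt S T"
  proof (rule grevlex_gtI[of S T u])
    show "mdeg S = mdeg T" unfolding S_def T_def mdeg_Tm ..
    show "Poly_Mapping.lookup S u < Poly_Mapping.lookup T u" by (rule lt)
    fix w assume "var_gt u w" then show "Poly_Mapping.lookup S w = Poly_Mapping.lookup T w" by (rule below)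
  qed
  then show ?thesis unfolding S_def T_def .
qed



definition lsq :: "nat \<Rightarrow> nat \<Rightarrow> nat \<Rightarrow> nat" where
  "lsq m q i = (if i \<le> m - q mod m then q div m else q div m + 1)"

definition psq :: "nat \<Rightarrow> nat \<Rightarrow> nat \<Rightarrow> nat" where
  "psq m q i = (if i \<in> {1..m} then (if i \<le> m - q mod m then m - q mod m + 1 - i
      else 2 * m - q mod m + 1 - i) else i)"

lemma psq_val1: "i \<in> {1..m} \<Longrightarrow> i \<le> m - q mod m \<Longrightarrow> psq m q i = m - q mod m + 1 - i"
  by (simp add: psq_def)

lemma psq_val2: "i \<in> {1..m} \<Longrightarrow> \<not> i \<le> m - q mod m \<Longrightarrow> psq m q i = 2 * m - q mod m + 1 - i"
  by (simp add: psq_def)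

lemma psq_range:
  assumes "m \<ge> 1" "i \<in> {1..m}"
  shows "psq m q i \<in> {1..m}"
proof -
  have mu: "q mod m < m" using assms by simp
  have "1 \<le> i" "i \<le> m" using assms by auto
  show ?thesis
  proof (cases "i \<le> m - q mod m")
    case True then show ?thesis using psq_val1[OF assms(2) True] mu \<open>1 \<le> i\<close> \<open>i \<le> m\<close>
      by (simp only: atLeastAtMost_iff) arith
  next
    case False then show ?thesis using psq_val2[OF assms(2) False] mu \<open>1 \<le> i\<close> \<open>i \<le> m\<close>
      by (simp only: atLeastAtMost_iff) arith
  qed
qed

lemma psq_inj:
  assumes "m \<ge> 1" "i \<in> {1..m}" "j \<in> {1..m}" "psq m q i = psq m q j"
  shows "i = j"
proof -
  have mu: "q mod m < m" using assms by simp
  have ij: "1 \<le> i" "i \<le> m" "1 \<le> j" "j \<le> m" using assms by auto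
  consider "i \<le> m - q mod m" "j \<le> m - q mod m" | "i \<le> m - q mod m" "\<not> j \<le> m - q mod m"
    | "\<not> i \<le> m - q mod m" "j \<le> m - q mod m" | "\<not> i \<le> m - q mod m" "\<not> j \<le> m - q mod m"
    by blast
  then show ?thesis
  proof cases
    case 1 then show ?thesis using assms(4) psq_val1[OF assms(2) 1(1)] psq_val1[OF assms(3) 1(2)] ij mu by arith
  next
    case 2 then show ?thesis using assms(4) psq_val1[OF assms(2) 2(1)] psq_val2[OF assms(3) 2(2)] ij mu by arith
  next
    case 3 then show ?thesis using assms(4) psq_val2[OF assms(2) 3(1)] psq_val1[OF assms(3) 3(2)] ij mu by arith
  next
    case 4 then show ?thesis using assms(4) psq_val2[OF assms(2) 4(1)] psq_val2[OF assms(3) 4(2)] ij mu by arith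
  qed
qed

lemma psq_permutes:
  assumes "m \<ge> 1"
  shows "psq m q permutes {1..m}"
proof (rule bij_imp_permutes)
  have sub: "psq m q ` {1..m} \<subseteq> {1..m}" using psq_range[OF assms] by blast
  have inj: "inj_on (psq m q) {1..m}" using psq_inj[OF assms] by (auto simp: inj_on_def)
  have "psq m q ` {1..m} = {1..m}" using endo_inj_surj[OF _ sub inj] by simp
  then show "bij_betw (psq m q) {1..m} {1..m}" using inj by (simp add: bij_betw_def)
  show "\<And>x. x \<notin> {1..m} \<Longrightarrow> psq m q x = x" unfolding psq_def by presburger
qed

lemma split_range:
  fixes m mu :: nat
  assumes "m \<ge> 1" "mu < m"
  shows "{1..m} = {1..m - mu} \<union> {m - mu + 1..m}" "{1..m - mu} \<inter> {m - mu + 1..m} = {}"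
proof -
  show "{1..m} = {1..m - mu} \<union> {m - mu + 1..m}"
    using assms apply - apply (rule set_eqI) apply (simp only: Un_iff atLeastAtMost_iff) apply arith done
  show "{1..m - mu} \<inter> {m - mu + 1..m} = {}"
    using assms apply - apply (rule equals0I) apply (simp only: Int_iff atLeastAtMost_iff) apply arith done
qed

lemma lsq_sum:
  assumes "m \<ge> 1"
  shows "(\<Sum>i\<in>{1..m}. lsq m q i) = q"
proof -
  let ?mu = "q mod m" and ?la = "q div m"
  have mu: "?mu < m" using assms by simp
  have "(\<Sum>i\<in>{1..m}. lsq m q i) = (\<Sum>i\<in>{1..m - ?mu}. lsq m q i) + (\<Sum>i\<in>{m - ?mu + 1..m}. lsq m q i)"
    unfolding split_range(1)[OF assms mu] by (rule sum.union_disjoint) auto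
  also have "(\<Sum>i\<in>{1..m - ?mu}. lsq m q i) = (\<Sum>i\<in>{1..m - ?mu}. ?la)"
    by (intro sum.cong) (auto simp: lsq_def)
  also have "(\<Sum>i\<in>{m - ?mu + 1..m}. lsq m q i) = (\<Sum>i\<in>{m - ?mu + 1..m}. ?la + 1)"
    by (intro sum.cong) (auto simp: lsq_def)
  also have "(\<Sum>i\<in>{1..m - ?mu}. ?la) + (\<Sum>i\<in>{m - ?mu + 1..m}. ?la + 1) = (m - ?mu) * ?la + ?mu * (?la + 1)"
    using mu by simp
  also have "\<dots> = m * ?la + ?mu" using mu by (simp add: algebra_simps diff_mult_distrib)
  also have "\<dots> = q" by simp
  finally show ?thesis .
qed

lemma lsq_mono: "i \<le> j \<Longrightarrow> lsq m q i \<le> lsq m q j"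
  unfolding lsq_def by auto

lemma lsq_rng: "lsq m q i \<le> lsq m q j + 1"
  unfolding lsq_def by auto

lemma psq_cover:
  assumes m: "m \<ge> 1" and i0: "i0 \<in> {1..m}" and c: "1 \<le> c" "c < psq m q i0"
  shows "\<exists>i'\<in>{1..m}. psq m q i' = c \<and> (lsq m q i' < lsq m q i0 \<or> (lsq m q i' = lsq m q i0 \<and> i0 < i'))"
proof -
  let ?mu = "q mod m"
  have mu: "?mu < m" using m by simp
  show ?thesis
  proof (cases "i0 \<le> m - ?mu")
    case True
    then have pc: "c < m - ?mu + 1 - i0" using c i0 by (simp add: psq_def)
    define i' where "i' = m - ?mu + 1 - c"
    have i'r: "i' \<in> {1..m}" "i' \<le> m - ?mu" "i0 < i'" using pc c mu True i0 by (auto simp: i'_def)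
    have "psq m q i' = m - ?mu + 1 - i'" using i'r by (simp add: psq_def)
    then have "psq m q i' = c" using i'r pc c unfolding i'_def by arith
    moreover have "lsq m q i' = lsq m q i0" using i'r True by (simp add: lsq_def)
    ultimately show ?thesis using i'r by blast
  next
    case False
    then have pc: "c < 2 * m - ?mu + 1 - i0" using c i0 by (simp add: psq_def)
    show ?thesis
    proof (cases "c \<le> m - ?mu")
      case True
      define i' where "i' = m - ?mu + 1 - c"
      have i'r: "i' \<in> {1..m}" "i' \<le> m - ?mu" using c mu True by (auto simp: i'_def)
      have "psq m q i' = m - ?mu + 1 - i'" using i'r by (simp add: psq_def)
      then have "psq m q i' = c" using i'r c True unfolding i'_def by arith
      moreover have "lsq m q i' < lsq m q i0" using i'r False by (simp add: lsq_def)
      ultimately show ?thesis using i'r by blast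
    next
      case c2: False
      define i' where "i' = 2 * m - ?mu + 1 - c"
      have i'r: "i' \<in> {1..m}" "\<not> i' \<le> m - ?mu" "i0 < i'" using c pc mu c2 False i0 by (auto simp: i'_def)
      have "psq m q i' = 2 * m - ?mu + 1 - i'" using i'r by (simp add: psq_def)
      then have "psq m q i' = c" using i'r c pc c2 mu unfolding i'_def by arith
      moreover have "lsq m q i' = lsq m q i0" using i'r False by (simp add: lsq_def)
      ultimately show ?thesis using i'r by blast
    qed
  qed
qed

lemma Tm_lm:
  assumes m: "m \<ge> 1"
  shows "Tm m (psq m q) (lsq m q) = lm_formula m q"
proof -
  let ?mu = "q mod m" and ?la = "q div m"
  have mu: "?mu < m" using m by simp
  have "Tm m (psq m q) (lsq m q) = (\<Sum>i\<in>{1..m - ?mu}. Poly_Mapping.single (lsq m q i, i, psq m q i) 1)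
      + (\<Sum>i\<in>{m - ?mu + 1..m}. Poly_Mapping.single (lsq m q i, i, psq m q i) 1)"
    unfolding Tm_def split_range(1)[OF m mu] by (rule sum.union_disjoint) auto
  also have "(\<Sum>i\<in>{1..m - ?mu}. Poly_Mapping.single (lsq m q i, i, psq m q i) (1::nat)) =
      (\<Sum>i\<in>{1..m - ?mu}. Poly_Mapping.single (?la, i, m - ?mu + 1 - i) 1)"
    by (intro sum.cong) (auto simp: lsq_def psq_def)
  also have "(\<Sum>i\<in>{m - ?mu + 1..m}. Poly_Mapping.single (lsq m q i, i, psq m q i) (1::nat)) =
      (\<Sum>i\<in>{m - ?mu + 1..m}. Poly_Mapping.single (?la + 1, i, 2 * m - ?mu + 1 - i) 1)"
    by (intro sum.cong) (auto simp: lsq_def psq_def)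
  finally show ?thesis unfolding lm_formula_def Let_def .
qed

lemma keys_Tm: "v \<in> Poly_Mapping.keys (Tm m p l) \<Longrightarrow> \<exists>i\<in>{1..m}. v = (l i, i, p i)"
proof -
  assume v: "v \<in> Poly_Mapping.keys (Tm m p l)"
  obtain a i j where vv: "v = (a, i, j)" by (cases v) auto
  have "Poly_Mapping.lookup (Tm m p l) (a, i, j) \<noteq> 0" using v vv by (simp add: in_keys_iff)
  then have "i \<in> {1..m} \<and> a = l i \<and> j = p i" unfolding lookup_Tm by (simp split: if_splits)
  then show ?thesis using vv by blast
qed

lemma lm_disjoint:
  assumes m: "m \<ge> 1" and ne: "q \<noteq> q'"
  shows "Poly_Mapping.keys (lm_formula m q) \<inter> Poly_Mapping.keys (lm_formula m q') = {}"
proof (rule ccontr)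
  assume "\<not> ?thesis"
  then obtain v where v: "v \<in> Poly_Mapping.keys (Tm m (psq m q) (lsq m q))"
      "v \<in> Poly_Mapping.keys (Tm m (psq m q') (lsq m q'))"
    unfolding Tm_lm[OF m] by blast
  obtain i where i: "i \<in> {1..m}" "v = (lsq m q i, i, psq m q i)" using keys_Tm[OF v(1)] by blast
  obtain i' where i': "i' \<in> {1..m}" "v = (lsq m q' i', i', psq m q' i')" using keys_Tm[OF v(2)] by blast
  have ii: "i' = i" using i i' by simp
  have eql: "lsq m q i = lsq m q' i" and eqp: "psq m q i = psq m q' i" using i i' ii by auto
  have mu: "q mod m < m" "q' mod m < m" using m by auto
  have qq: "q = m * (q div m) + q mod m" "q' = m * (q' div m) + q' mod m" by simp_all
  have ir: "1 \<le> i" "i \<le> m" using i(1) by auto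
  have "q div m = q' div m \<and> q mod m = q' mod m"
  proof (cases "i \<le> m - q mod m")
    case A: True
    have l1: "lsq m q i = q div m" using A by (simp add: lsq_def)
    have p1: "psq m q i = m - q mod m + 1 - i" using psq_val1[OF i(1) A] .
    show ?thesis
    proof (cases "i \<le> m - q' mod m")
      case B: True
      have "lsq m q' i = q' div m" using B by (simp add: lsq_def)
      moreover have "psq m q' i = m - q' mod m + 1 - i" using psq_val1[OF i(1) B] .
      ultimately show ?thesis using l1 p1 eql eqp A B ir mu by arith
    next
      case B: False
      have "psq m q' i = 2 * m - q' mod m + 1 - i" using psq_val2[OF i(1) B] .
      then have False using p1 eqp A B ir mu by arith
      then show ?thesis ..
    qed
  next
    case A: False
    have l1: "lsq m q i = q div m + 1" using A by (simp add: lsq_def)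
    have p1: "psq m q i = 2 * m - q mod m + 1 - i" using psq_val2[OF i(1) A] .
    show ?thesis
    proof (cases "i \<le> m - q' mod m")
      case B: True
      have "psq m q' i = m - q' mod m + 1 - i" using psq_val1[OF i(1) B] .
      then have False using p1 eqp A B ir mu by arith
      then show ?thesis ..
    next
      case B: False
      have "lsq m q' i = q' div m + 1" using B by (simp add: lsq_def)
      moreover have "psq m q' i = 2 * m - q' mod m + 1 - i" using psq_val2[OF i(1) B] .
      ultimately show ?thesis using l1 p1 eql eqp A B ir mu by arith
    qed
  qed
  then have "q = q'" using qq by metis
  then show False using ne by simp
qed



lemma lsq_le:
  assumes m: "m \<ge> 1" and i: "i \<in> {1..m}"
  shows "lsq m q i \<le> q"
proof -
  have e: "q div m * m + q mod m = q" by simp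
  have le: "q div m \<le> q div m * m" using m by simp
  show ?thesis
  proof (cases "i \<le> m - q mod m")
    case True
    then have "lsq m q i = q div m" by (simp add: lsq_def)
    then show ?thesis using e le by linarith
  next
    case False
    then have "q mod m \<ge> 1" using i by auto
    moreover have "lsq m q i = q div m + 1" using False by (simp add: lsq_def)
    ultimately show ?thesis using e le by linarith
  qed
qed

lemma dcoef_lead:
  assumes m: "m \<ge> 1" and q: "q < k"
  shows "(dcoef m k q :: 'a::field mpoly) \<noteq> 0" "lead_mon (dcoef m k q :: 'a mpoly) = lm_formula m q"
proof -
  define S where "S = Tm m (psq m q) (lsq m q)"
  define lsE where "lsE = restrict (lsq m q) {1..m}"
  define P where "P = {p. p permutes {1..m}}"
  have psP: "psq m q \<in> P" unfolding P_def using psq_permutes[OF m] by simp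
  have "\<forall>i\<in>{1..m}. lsq m q i < k" using lsq_le[OF m] q le_less_trans by blast
  then have lsL: "lsE \<in> Ls m k"
    unfolding Ls_def lsE_def by (auto simp: PiE_def extensional_def)
  have TS: "Tm m p l = S \<longleftrightarrow> p = psq m q \<and> l = lsE" if p: "p \<in> P" and l: "l \<in> Ls m k" for p l
  proof
    assume eq: "Tm m p l = S"
    have pt: "l i = lsq m q i \<and> p i = psq m q i" if i: "i \<in> {1..m}" for i
    proof -
      have "Poly_Mapping.lookup (Tm m p l) (l i, i, p i) = 1" using i by (simp add: lookup_Tm)
      then have "Poly_Mapping.lookup S (l i, i, p i) = 1" using eq by simp
      then show ?thesis
      proof (rule contrapos_pp)
        assume "\<not> (l i = lsq m q i \<and> p i = psq m q i)"
        then have "\<not> (i \<in> {1..m} \<and> l i = lsq m q i \<and> p i = psq m q i)" by blast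
        then have "Poly_Mapping.lookup S (l i, i, p i) = 0" unfolding S_def lookup_Tm by (rule if_not_P)
        then show "Poly_Mapping.lookup S (l i, i, p i) \<noteq> 1" by simp
      qed
    qed
    have "p = psq m q"
    proof
      fix i show "p i = psq m q i"
      proof (cases "i \<in> {1..m}")
        case True then show ?thesis using pt by blast
      next
        case False
        have "p i = i" using p False unfolding P_def by (simp add: permutes_not_in)
        moreover have "psq m q i = i" unfolding psq_def by (rule if_not_P[OF False])
        ultimately show ?thesis by simp
      qed
    qed
    moreover have "l = lsE"
    proof
      fix i show "l i = lsE i"
      proof (cases "i \<in> {1..m}")
        case True
        have "lsE i = lsq m q i" unfolding lsE_def restrict_def by (rule if_P[OF True])
        then show ?thesis using pt[OF True] by simp
      next
        case False
        have "lsE i = undefined" unfolding lsE_def restrict_def by (rule if_not_P[OF False])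
        moreover have "l i = undefined" using l False unfolding Ls_def by (rule PiE_arb)
        ultimately show ?thesis by simp
      qed
    qed
    ultimately show "p = psq m q \<and> l = lsE" by blast
  next
    assume "p = psq m q \<and> l = lsE"
    then show "Tm m p l = S" unfolding S_def lsE_def by (intro Tm_cong) auto
  qed
  have sumE: "(\<Sum>i\<in>{1..m}. lsE i) = q" unfolding lsE_def using lsq_sum[OF m] by simp
  have "Poly_Mapping.lookup (dcoef m k q :: 'a mpoly) S =
      (\<Sum>p\<in>P. \<Sum>l\<in>Ls m k. if (\<Sum>i\<in>{1..m}. l i) = q \<and> Tm m p l = S then of_int (sign p) else 0)"
    unfolding lookup_dcoef P_def ..
  also have "\<dots> = (\<Sum>p\<in>P. if p = psq m q then (\<Sum>l\<in>Ls m k. if l = lsE then of_int (sign p) else 0) else 0)"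
  proof (rule sum.cong[OF refl])
    fix p assume p: "p \<in> P"
    show "(\<Sum>l\<in>Ls m k. if (\<Sum>i\<in>{1..m}. l i) = q \<and> Tm m p l = S then (of_int (sign p) :: 'a) else 0) =
      (if p = psq m q then (\<Sum>l\<in>Ls m k. if l = lsE then of_int (sign p) else 0) else 0)"
    proof (cases "p = psq m q")
      case True
      have "(\<Sum>l\<in>Ls m k. if (\<Sum>i\<in>{1..m}. l i) = q \<and> Tm m p l = S then (of_int (sign p) :: 'a) else 0) =
        (\<Sum>l\<in>Ls m k. if l = lsE then of_int (sign p) else 0)"
      proof (rule sum.cong[OF refl])
        fix l assume l: "l \<in> Ls m k"
        have "((\<Sum>i\<in>{1..m}. l i) = q \<and> Tm m p l = S) = (l = lsE)"
          using TS[OF p l] True sumE by auto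
        then show "(if (\<Sum>i\<in>{1..m}. l i) = q \<and> Tm m p l = S then (of_int (sign p) :: 'a) else 0) =
          (if l = lsE then of_int (sign p) else 0)" by simp
      qed
      then show ?thesis using True by simp
    next
      case False
      have "(\<Sum>l\<in>Ls m k. if (\<Sum>i\<in>{1..m}. l i) = q \<and> Tm m p l = S then (of_int (sign p) :: 'a) else 0) = 0"
        using TS[OF p] False by (intro sum.neutral) auto
      then show ?thesis using False by simp
    qed
  qed
  also have "\<dots> = of_int (sign (psq m q))"
  proof -
    have fP: "finite P" unfolding P_def by (rule finite_permutations) simp
    have "(\<Sum>l\<in>Ls m k. if l = lsE then (of_int (sign p) :: 'a) else 0) = of_int (sign p)" for p :: "nat \<Rightarrow> nat"
      using lsL finite_Ls[of m k] by (simp add: sum.delta)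
    then show ?thesis using psP fP by (simp add: sum.delta)
  qed
  finally have lS: "Poly_Mapping.lookup (dcoef m k q :: 'a mpoly) S = of_int (sign (psq m q))" .
  have "(of_int (sign (psq m q)) :: 'a) \<noteq> 0"
    by (cases "psq m q" rule: sign_cases) simp_all
  then have Sk: "S \<in> Poly_Mapping.keys (dcoef m k q :: 'a mpoly)" using lS by (simp add: in_keys_iff)
  then show "(dcoef m k q :: 'a mpoly) \<noteq> 0" by auto
  have "\<forall>M\<in>Poly_Mapping.keys (dcoef m k q :: 'a mpoly). M \<noteq> S \<longrightarrow> grevlex_gt S M"
  proof (intro ballI impI)
    fix M assume M: "M \<in> Poly_Mapping.keys (dcoef m k q :: 'a mpoly)" "M \<noteq> S"
    then have "(\<Sum>p\<in>P. \<Sum>l\<in>Ls m k. if (\<Sum>i\<in>{1..m}. l i) = q \<and> Tm m p l = M then (of_int (sign p) :: 'a) else 0) \<noteq> 0"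
      unfolding P_def by (simp add: in_keys_iff lookup_dcoef)
    then obtain p where p: "p \<in> P" and pf:
      "(\<Sum>l\<in>Ls m k. if (\<Sum>i\<in>{1..m}. l i) = q \<and> Tm m p l = M then (of_int (sign p) :: 'a) else 0) \<noteq> 0"
      by (rule sum.not_neutral_contains_not_neutral)
    obtain l where l: "l \<in> Ls m k"
      "(if (\<Sum>i\<in>{1..m}. l i) = q \<and> Tm m p l = M then (of_int (sign p) :: 'a) else 0) \<noteq> 0"
      by (rule sum.not_neutral_contains_not_neutral[OF pf])
    have "(\<Sum>i\<in>{1..m}. l i) = q \<and> Tm m p l = M"
    proof (rule ccontr)
      assume "\<not> ((\<Sum>i\<in>{1..m}. l i) = q \<and> Tm m p l = M)"
      then have "(if (\<Sum>i\<in>{1..m}. l i) = q \<and> Tm m p l = M then (of_int (sign p) :: 'a) else 0) = 0"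
        by (rule if_not_P)
      then show False using l(2) by simp
    qed
    then have sl: "(\<Sum>i\<in>{1..m}. l i) = q" and TM: "Tm m p l = M" by auto
    show "grevlex_gt S M" unfolding S_def TM[symmetric]
    proof (rule Tm_max)
      show "p permutes {1..m}" using p unfolding P_def by simp
      show "(\<Sum>i\<in>{1..m}. l i) = (\<Sum>i\<in>{1..m}. lsq m q i)" using sl lsq_sum[OF m] by simp
      show "\<And>i j. i \<in> {1..m} \<Longrightarrow> j \<in> {1..m} \<Longrightarrow> i \<le> j \<Longrightarrow> lsq m q i \<le> lsq m q j"
        using lsq_mono by blast
      show "\<And>i j. i \<in> {1..m} \<Longrightarrow> j \<in> {1..m} \<Longrightarrow> lsq m q i \<le> lsq m q j + 1"
        using lsq_rng by blast
      show "\<And>i0 c. i0 \<in> {1..m} \<Longrightarrow> 1 \<le> c \<Longrightarrow> c < psq m q i0 \<Longrightarrow>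
        \<exists>i'\<in>{1..m}. psq m q i' = c \<and> (lsq m q i' < lsq m q i0 \<or> (lsq m q i' = lsq m q i0 \<and> i0 < i'))"
        using psq_cover[OF m] by blast
      show "Tm m p l \<noteq> Tm m (psq m q) (lsq m q)" using M(2) TM S_def by simp
    qed
  qed
  then have "lead_mon (dcoef m k q :: 'a mpoly) = S" using Sk by (intro lead_mon_eqI)
  then show "lead_mon (dcoef m k q :: 'a mpoly) = lm_formula m q" unfolding S_def Tm_lm[OF m] .
qed

theorem theorem3p2:
  fixes m k :: nat
  assumes "alg_closed_field TYPE('a::field)"
    and "m \<ge> 1" and "k \<ge> 1"
  shows "is_groebner_basis {dcoef m k q :: 'a mpoly | q. q < k} (Ideal_mk m k)
    \<and> (\<forall>q<k. lead_mon (dcoef m k q :: 'a mpoly) = lm_formula m q)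
    \<and> (\<forall>q<k. \<forall>q'<k. q \<noteq> q' \<longrightarrow>
         Poly_Mapping.keys (lead_mon (dcoef m k q :: 'a mpoly)) \<inter> Poly_Mapping.keys (lead_mon (dcoef m k q' :: 'a mpoly)) = {})"
proof -
  note m = assms(2)
  define Gs where "Gs = {dcoef m k q :: 'a mpoly | q. q < k}"
  have IG: "Ideal_mk m k = ideal_gen Gs" unfolding Ideal_mk_def Gs_def ..
  have lead: "\<forall>q<k. lead_mon (dcoef m k q :: 'a mpoly) = lm_formula m q"
    using dcoef_lead(2)[OF m] by blast
  have disj: "\<forall>q<k. \<forall>q'<k. q \<noteq> q' \<longrightarrow>
         Poly_Mapping.keys (lead_mon (dcoef m k q :: 'a mpoly)) \<inter> Poly_Mapping.keys (lead_mon (dcoef m k q' :: 'a mpoly)) = {}"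
  proof (intro allI impI)
    fix q q' assume "q < k" "q' < k" "q \<noteq> q'"
    then show "Poly_Mapping.keys (lead_mon (dcoef m k q :: 'a mpoly)) \<inter> Poly_Mapping.keys (lead_mon (dcoef m k q' :: 'a mpoly)) = {}"
      using lead lm_disjoint[OF m] by simp
  qed
  have sub: "Gs \<subseteq> Ideal_mk m k"
  proof
    fix g assume g: "g \<in> Gs"
    have "g = (\<Sum>h\<in>{g}. (\<lambda>_. 1) h * h) \<and> finite {g} \<and> {g} \<subseteq> Gs" using g by simp
    then have "\<exists>F c. g = (\<Sum>h\<in>F. c h * h) \<and> finite F \<and> F \<subseteq> Gs" by (intro exI)
    then show "g \<in> Ideal_mk m k" unfolding IG ideal_gen_def by simp
  qed
  have nz: "0 \<notin> Gs"
  proof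
    assume "0 \<in> Gs"
    then obtain q where "q < k" "dcoef m k q = (0 :: 'a mpoly)" unfolding Gs_def by auto
    then show False using dcoef_lead(1)[OF m] by metis
  qed
  have cop: "Poly_Mapping.keys (lead_mon g) \<inter> Poly_Mapping.keys (lead_mon h) = {}"
    if gh: "g \<in> Gs" "h \<in> Gs" "g \<noteq> h" for g h
  proof -
    obtain q where q: "q < k" "g = dcoef m k q" using gh(1) unfolding Gs_def by auto
    obtain q' where q': "q' < k" "h = dcoef m k q'" using gh(2) unfolding Gs_def by auto
    have "q \<noteq> q'" using q q' gh(3) by auto
    then show ?thesis using disj q q' by simp
  qed
  have "\<forall>f\<in>(Ideal_mk m k :: 'a mpoly set). f \<noteq> 0 \<longrightarrow> (\<exists>g\<in>Gs. mon_dvd (lead_mon g) (lead_mon f))"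
  proof (intro ballI impI)
    fix f :: "'a mpoly" assume f: "f \<in> Ideal_mk m k" "f \<noteq> 0"
    show "\<exists>g\<in>Gs. mon_dvd (lead_mon g) (lead_mon f)"
      by (rule coprime_GB[OF nz cop]) (use f IG in auto)
  qed
  then have "is_groebner_basis Gs (Ideal_mk m k)"
    unfolding is_groebner_basis_def using sub nz by (intro conjI)
  then have gb: "is_groebner_basis {dcoef m k q :: 'a mpoly | q. q < k} (Ideal_mk m k)"
    unfolding Gs_def .
  show ?thesis by (rule conjI[OF gb conjI[OF lead disj]])
qed

end
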